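(* Let $\bar d=2^S$ with $S\ge1$, let $\bar\phi\in\mathcal S(\bar d)$, let $T\in\mathbb N_+$ and $\bar p_1,\dots,\bar p_T\in\Delta(\bar d)$. Then for every scale $s\in[1:S]$, $$\sum_{l=1}^{2^{S-s}}\Big(\frac{1}{|I^{(s,l)}|}\sum_{j=1}^{\bar d}\big|\langle\bar\phi,h^{(s,l)}\otimes e^{(j)}\rangle\big|\Big)\sqrt{1+\sum_{t=1}^T\sum_{i\in I^{(s,l)}}\bar p_{t,i}}\ \le\ \sqrt{\sum_{i=1}^{\bar d-1}\mathbf 1[\bar\phi_i\neq\bar\phi_{i+1}]}\cdot\sqrt{\bar d+T}.$$
   Context: $\Delta(n)=\{p\ge0,\|p\|_1=1\}$; $\mathcal S(n)$ is the set of $n\times n$ right stochastic matrices; $\bar\phi_i$ is the $i$-th row; $\langle x,y\rangle=\sum_{i,j}x_{i,j}y_{i,j}$; $(u\otimes v)_{i,j}=u_iv_j$; $e^{(j)}$ is the $j$-th standard basis vector; $[a:b]=\{a,\dots,b\}$. For $s\in[1:S]$, $l\in[1:2^{S-s}]$, the Haar vector $h^{(s,l)}\in\mathbb R^{\bar d}$ has entries $1$ on $[2^s(l-1)+1:2^s(l-1)+2^{s-1}]$, $-1$ on $[2^s(l-1)+2^{s-1}+1:2^sl]$, and $0$ elsewhere; its support is $I^{(s,l)}=[2^s(l-1)+1:2^sl]$. *)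

theory Defs
  imports "HOL-Analysis.Analysis"
begin

(* Indices are 1-based: i, j range over {1..d}. *)

definition prob_simplex :: "nat \<Rightarrow> (nat \<Rightarrow> real) set" where
  "prob_simplex n = {p. (\<forall>i\<in>{1..n}. p i \<ge> 0) \<and> (\<Sum>i=1..n. p i) = 1}"

definition right_stochastic :: "nat \<Rightarrow> (nat \<Rightarrow> nat \<Rightarrow> real) set" where
  "right_stochastic n = {phi. \<forall>i\<in>{1..n}. (\<lambda>j. phi i j) \<in> prob_simplex n}"

definition haar :: "nat \<Rightarrow> nat \<Rightarrow> nat \<Rightarrow> real" where
  "haar s l i = (if i \<in> {2^s*(l-1)+1 .. 2^s*(l-1)+2^(s-1)} then 1
                 else if i \<in> {2^s*(l-1)+2^(s-1)+1 .. 2^s*l} then -1 else 0)"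

definition haar_supp :: "nat \<Rightarrow> nat \<Rightarrow> nat set" where
  "haar_supp s l = {2^s*(l-1)+1 .. 2^s*l}"

definition frob :: "nat \<Rightarrow> (nat \<Rightarrow> nat \<Rightarrow> real) \<Rightarrow> (nat \<Rightarrow> nat \<Rightarrow> real) \<Rightarrow> real" where
  "frob n x y = (\<Sum>i=1..n. \<Sum>j=1..n. x i j * y i j)"

definition outer :: "(nat \<Rightarrow> real) \<Rightarrow> (nat \<Rightarrow> real) \<Rightarrow> nat \<Rightarrow> nat \<Rightarrow> real" where
  "outer u v i j = u i * v j"

definition std_basis :: "nat \<Rightarrow> nat \<Rightarrow> real" where
  "std_basis j k = (if k = j then 1 else 0)"

definition rows_differ :: "nat \<Rightarrow> (nat \<Rightarrow> nat \<Rightarrow> real) \<Rightarrow> nat \<Rightarrow> bool" where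
  "rows_differ n phi i = (\<exists>j\<in>{1..n}. phi i j \<noteq> phi (Suc i) j)"

end

theory Submission
  imports Defs
begin

lemma partition_sum:
  fixes f :: "nat \<Rightarrow> real"
  shows "(\<Sum>l=1..m. \<Sum>i\<in>{q*(l-1)+1..q*l}. f i) = (\<Sum>i=1..q*m. f i)"
proof (induction m)
  case 0 then show ?case by simp
next
  case (Suc m)
  have "(\<Sum>i=1..q*m+q. f i) = (\<Sum>i=1..q*m. f i) + (\<Sum>i=q*m+1..q*m+q. f i)"
    by (rule sum.ub_add_nat) simp
  then show ?case using Suc by (simp add: sum.cl_ivl_Suc add.commute)
qed

lemma frob_outer:
  assumes "j \<in> {1..n}"
  shows "frob n phi (outer h (std_basis j)) = (\<Sum>i=1..n. h i * phi i j)"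
proof -
  have "\<And>i. (\<Sum>k=1..n. phi i k * (h i * (if k = j then 1 else 0))) = h i * phi i j"
  proof -
    fix i
    have "(\<Sum>k=1..n. phi i k * (h i * (if k = j then 1 else 0))) = (\<Sum>k=1..n. if k = j then phi i k * h i else 0)"
      by (rule sum.cong) auto
    also have "\<dots> = phi i j * h i" using assms by (simp add: sum.delta')
    finally show "(\<Sum>k=1..n. phi i k * (h i * (if k = j then 1 else 0))) = h i * phi i j" by simp
  qed
  then show ?thesis unfolding frob_def outer_def std_basis_def by simp
qed

lemma abs_haar:
  assumes "s \<ge> 1" "l \<ge> 1"
  shows "\<bar>haar s l i\<bar> = (if i \<in> haar_supp s l then 1 else 0)"
proof -
  have e: "(2::nat)^s = 2^(s-1) + 2^(s-1)" using assms
    by (metis Suc_diff_le diff_Suc_1 mult_2 power_Suc)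
  have "(2::nat)^s * l = 2^s*(l-1) + 2^s" using assms(2) by (cases l) auto
  then show ?thesis unfolding haar_def haar_supp_def using e by auto
qed

lemma sum_haar:
  assumes "s \<ge> 1" "l \<ge> 1"
  shows "(\<Sum>i\<in>haar_supp s l. haar s l i) = 0"
proof -
  define a where "a = (2::nat)^s*(l-1)"
  define r where "r = (2::nat)^(s-1)"
  have e: "(2::nat)^s = r + r" using assms unfolding r_def
    by (metis Suc_diff_le diff_Suc_1 mult_2 power_Suc)
  have sl: "(2::nat)^s * l = a + r + r" using assms e unfolding a_def
    by (metis add.commute add.assoc le_add_diff_inverse mult.commute mult_Suc plus_1_eq_Suc)
  have hs: "haar_supp s l = {a+1..a+r+r}" unfolding haar_supp_def a_def[symmetric] sl ..
  have "(\<Sum>i=a+1..a+r+r. haar s l i) = (\<Sum>i=a+1..a+r. haar s l i) + (\<Sum>i=a+r+1..a+r+r. haar s l i)"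
    by (rule sum.ub_add_nat) simp
  also have "(\<Sum>i=a+1..a+r. haar s l i) = (\<Sum>i=a+1..a+r. 1)"
    by (rule sum.cong) (auto simp: haar_def a_def r_def)
  also have "(\<Sum>i=a+r+1..a+r+r. haar s l i) = (\<Sum>i=a+r+1..a+r+r. -1)"
    by (rule sum.cong) (use sl in \<open>auto simp: haar_def a_def r_def\<close>)
  finally show ?thesis using hs by simp
qed


theorem mainTheorem6:
  fixes S T :: nat and phi :: "nat \<Rightarrow> nat \<Rightarrow> real" and p :: "nat \<Rightarrow> nat \<Rightarrow> real"
    and s :: nat
  assumes "S \<ge> 1"
    and "phi \<in> right_stochastic (2^S)"
    and "T \<ge> 1"
    and "\<forall>t\<in>{1..T}. p t \<in> prob_simplex (2^S)"
    and "s \<in> {1..S}"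
  shows "(\<Sum>l=1..2^(S-s).
            (1 / real (card (haar_supp s l)) *
              (\<Sum>j=1..2^S. \<bar>frob (2^S) phi (outer (haar s l) (std_basis j))\<bar>))
            * sqrt (1 + (\<Sum>t=1..T. \<Sum>i\<in>haar_supp s l. p t i)))
         \<le> sqrt (real (card {i\<in>{1..2^S-1}. rows_differ (2^S) phi i}))
            * sqrt (real (2^S) + real T)"
proof -
  define d where "d = (2::nat)^S"
  define q where "q = (2::nat)^s"
  define m where "m = (2::nat)^(S-s)"
  have s1: "s \<ge> 1" and sS: "s \<le> S" using assms(5) by auto
  have dqm: "d = q * m" unfolding d_def q_def m_def using sS by (simp flip: power_add)
  have qpos: "q > 0" unfolding q_def by simp
  have phinn: "\<And>i j. i \<in> {1..d} \<Longrightarrow> j \<in> {1..d} \<Longrightarrow> phi i j \<ge> 0"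
    using assms(2) unfolding right_stochastic_def prob_simplex_def d_def by auto
  have phisum: "\<And>i. i \<in> {1..d} \<Longrightarrow> (\<Sum>j=1..d. phi i j) = 1"
    using assms(2) unfolding right_stochastic_def prob_simplex_def d_def by auto
  have pnn: "\<And>t i. t \<in> {1..T} \<Longrightarrow> i \<in> {1..d} \<Longrightarrow> p t i \<ge> 0"
    using assms(4) unfolding prob_simplex_def d_def by auto
  have psum: "\<And>t. t \<in> {1..T} \<Longrightarrow> (\<Sum>i=1..d. p t i) = 1"
    using assms(4) unfolding prob_simplex_def d_def by auto
  have supp: "\<And>l. haar_supp s l = {q*(l-1)+1..q*l}" unfolding haar_supp_def q_def by simp
  have suppsub: "\<And>l. l \<in> {1..m} \<Longrightarrow> haar_supp s l \<subseteq> {1..d}"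
  proof -
    fix l assume "l \<in> {1..m}"
    then have "q*l \<le> q*m" by simp
    then show "haar_supp s l \<subseteq> {1..d}" unfolding supp dqm by auto
  qed
  have cardI: "\<And>l. l \<ge> 1 \<Longrightarrow> card (haar_supp s l) = q"
  proof -
    fix l :: nat assume "l \<ge> 1"
    then have "q*l = q*(l-1) + q" by (cases l) auto
    then show "card (haar_supp s l) = q" unfolding supp by simp
  qed
  define P where "P l = (\<Sum>t=1..T. \<Sum>i\<in>haar_supp s l. p t i)" for l
  define c where "c l = (1 / real (card (haar_supp s l)) *
              (\<Sum>j=1..d. \<bar>frob d phi (outer (haar s l) (std_basis j))\<bar>))" for l
  have Pnn: "\<And>l. l \<in> {1..m} \<Longrightarrow> P l \<ge> 0"
    unfolding P_def using suppsub pnn by (force intro!: sum_nonneg)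
  have inner: "\<And>l j. l \<in> {1..m} \<Longrightarrow> j \<in> {1..d} \<Longrightarrow>
      frob d phi (outer (haar s l) (std_basis j)) = (\<Sum>i\<in>haar_supp s l. haar s l i * phi i j)"
  proof -
    fix l j assume l: "l \<in> {1..m}" and j: "j \<in> {1..d}"
    have "frob d phi (outer (haar s l) (std_basis j)) = (\<Sum>i=1..d. haar s l i * phi i j)"
      by (rule frob_outer[OF j])
    also have "\<dots> = (\<Sum>i\<in>haar_supp s l. haar s l i * phi i j)"
    proof (rule sum.mono_neutral_right)
      show "finite {1..d}" by simp
      show "haar_supp s l \<subseteq> {1..d}" using suppsub[OF l] .
      show "\<forall>i\<in>{1..d} - haar_supp s l. haar s l i * phi i j = 0"
        using abs_haar[OF s1, of l] l by (metis Diff_iff abs_0_eq mult_eq_0_iff atLeastAtMost_iff)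
    qed
    finally show "frob d phi (outer (haar s l) (std_basis j)) = (\<Sum>i\<in>haar_supp s l. haar s l i * phi i j)" .
  qed
  have cle1: "\<And>l. l \<in> {1..m} \<Longrightarrow> c l \<le> 1"
  proof -
    fix l assume l: "l \<in> {1..m}"
    have "(\<Sum>j=1..d. \<bar>frob d phi (outer (haar s l) (std_basis j))\<bar>)
        = (\<Sum>j=1..d. \<bar>\<Sum>i\<in>haar_supp s l. haar s l i * phi i j\<bar>)"
      using inner[OF l] by simp
    also have "\<dots> \<le> (\<Sum>j=1..d. \<Sum>i\<in>haar_supp s l. phi i j)"
    proof (rule sum_mono)
      fix j assume j: "j \<in> {1..d}"
      have "\<bar>\<Sum>i\<in>haar_supp s l. haar s l i * phi i j\<bar> \<le> (\<Sum>i\<in>haar_supp s l. \<bar>haar s l i * phi i j\<bar>)"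
        by (rule sum_abs)
      also have "\<dots> = (\<Sum>i\<in>haar_supp s l. phi i j)"
      proof (rule sum.cong)
        fix i assume i: "i \<in> haar_supp s l"
        then have "\<bar>haar s l i\<bar> = 1" using abs_haar[OF s1, of l i] l by auto
        moreover have "phi i j \<ge> 0" using phinn[OF _ j] i suppsub[OF l] by auto
        ultimately show "\<bar>haar s l i * phi i j\<bar> = phi i j" by (simp add: abs_mult)
      qed simp
      finally show "\<bar>\<Sum>i\<in>haar_supp s l. haar s l i * phi i j\<bar> \<le> (\<Sum>i\<in>haar_supp s l. phi i j)" .
    qed
    also have "\<dots> = (\<Sum>i\<in>haar_supp s l. \<Sum>j=1..d. phi i j)" by (rule sum.swap)
    also have "\<dots> = (\<Sum>i\<in>haar_supp s l. 1)"
      using phisum suppsub[OF l] by (intro sum.cong) auto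
    also have "\<dots> = real q" using cardI l by simp
    finally have "(\<Sum>j=1..d. \<bar>frob d phi (outer (haar s l) (std_basis j))\<bar>) \<le> real q" .
    then show "c l \<le> 1" unfolding c_def using cardI l qpos by (simp add: field_simps)
  qed
  have cnn: "\<And>l. c l \<ge> 0" unfolding c_def by (simp add: sum_nonneg)
  define D where "D = {i\<in>{1..d-1}. rows_differ d phi i}"
  define L where "L = {l\<in>{1..m}. \<exists>i\<in>{q*(l-1)+1..<q*l}. rows_differ d phi i}"
  have c0: "\<And>l. l \<in> {1..m} \<Longrightarrow> l \<notin> L \<Longrightarrow> c l = 0"
  proof -
    fix l assume l: "l \<in> {1..m}" and nl: "l \<notin> L"
    define a where "a = q*(l-1)+1"
    have ql: "q*l = q*(l-1) + q" using l by (cases l) auto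
    have nd: "\<And>i. i \<in> {a..<q*l} \<Longrightarrow> \<not> rows_differ d phi i" using nl l unfolding L_def a_def by auto
    have const: "\<forall>j\<in>{1..d}. phi (a+k) j = phi a j" if "k < q" for k
      using that
    proof (induction k)
      case 0 then show ?case by simp
    next
      case (Suc k)
      have "a + k \<in> {a..<q*l}" using Suc.prems ql unfolding a_def by auto
      then have "\<forall>j\<in>{1..d}. phi (a+k) j = phi (Suc (a+k)) j" using nd unfolding rows_differ_def by auto
      then show ?case using Suc by auto
    qed
    have "\<And>j. j \<in> {1..d} \<Longrightarrow> frob d phi (outer (haar s l) (std_basis j)) = 0"
    proof -
      fix j assume j: "j \<in> {1..d}"
      have "(\<Sum>i\<in>haar_supp s l. haar s l i * phi i j) = (\<Sum>i\<in>haar_supp s l. haar s l i * phi a j)"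
      proof (rule sum.cong)
        fix i assume "i \<in> haar_supp s l"
        then have "i = a + (i - a)" "i - a < q" unfolding supp a_def using ql by auto
        then show "haar s l i * phi i j = haar s l i * phi a j" using const j by metis
      qed simp
      also have "\<dots> = (\<Sum>i\<in>haar_supp s l. haar s l i) * phi a j" by (simp add: sum_distrib_right)
      also have "\<dots> = 0" using sum_haar[OF s1] l by simp
      finally show "frob d phi (outer (haar s l) (std_basis j)) = 0" using inner[OF l j] by simp
    qed
    then show "c l = 0" unfolding c_def by simp
  qed
  have Lsub: "L \<subseteq> (\<lambda>i. (i-1) div q + 1) ` D"
  proof
    fix l assume "l \<in> L"
    then obtain i where l: "l \<in> {1..m}" and i: "i \<in> {q*(l-1)+1..<q*l}" and rd: "rows_differ d phi i"
      unfolding L_def by auto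
    have ql: "q*l = q*(l-1) + q" using l by (cases l) auto
    have "(i-1) div q = l-1" using i ql by (intro div_nat_eqI) auto
    moreover have "q*l \<le> d" using l dqm by simp
    then have "i \<in> D" using i rd unfolding D_def by auto
    ultimately show "l \<in> (\<lambda>i. (i-1) div q + 1) ` D" using l by force
  qed
  have finD: "finite D" unfolding D_def by simp
  have cardL: "card L \<le> card D"
    using card_mono[OF finite_imageI[OF finD] Lsub] card_image_le[OF finD, of "\<lambda>i. (i-1) div q + 1"] by linarith
  have finL: "finite L" unfolding L_def by simp
  have LsubM: "L \<subseteq> {1..m}" unfolding L_def by auto
  have sumP: "(\<Sum>l=1..m. P l) = real T"
  proof -
    have "(\<Sum>l=1..m. P l) = (\<Sum>t=1..T. \<Sum>l=1..m. \<Sum>i\<in>haar_supp s l. p t i)"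
      unfolding P_def by (rule sum.swap)
    also have "\<dots> = (\<Sum>t=1..T. \<Sum>i=1..d. p t i)"
      unfolding supp dqm using partition_sum[where q=q and m=m] by presburger
    also have "\<dots> = (\<Sum>t=1..T. 1)" using psum by simp
    finally show ?thesis by simp
  qed
  have "(\<Sum>l=1..m. c l * sqrt (1 + P l)) \<le> (\<Sum>l=1..m. if l \<in> L then sqrt (1 + P l) else 0)"
  proof (rule sum_mono)
    fix l assume l: "l \<in> {1..m}"
    show "c l * sqrt (1 + P l) \<le> (if l \<in> L then sqrt (1 + P l) else 0)"
    proof (cases "l \<in> L")
      case True
      have "c l * sqrt (1 + P l) \<le> 1 * sqrt (1 + P l)"
        using cle1[OF l] Pnn[OF l] by (intro mult_right_mono) auto
      then show ?thesis using True by simp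
    qed (use c0 l in auto)
  qed
  also have "\<dots> = (\<Sum>l\<in>L. sqrt (1 + P l))"
  proof -
    have e: "{1..m} \<inter> L = L" using LsubM by blast
    show ?thesis using sum.inter_restrict[of "{1..m}" "\<lambda>l. sqrt (1 + P l)" L] unfolding e by simp
  qed
  also have "\<dots> \<le> sqrt (real (card L) * (\<Sum>l\<in>L. 1 + P l))"
  proof (rule real_le_rsqrt)
    have "(\<Sum>l\<in>L. sqrt (1 + P l))\<^sup>2 \<le> (\<Sum>l\<in>L. (sqrt (1 + P l))\<^sup>2) * card L"
      by (rule sum_squared_le_sum_of_squares)
    also have "(\<Sum>l\<in>L. (sqrt (1 + P l))\<^sup>2) = (\<Sum>l\<in>L. 1 + P l)"
      using Pnn LsubM by (intro sum.cong) auto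
    finally show "(\<Sum>l\<in>L. sqrt (1 + P l))\<^sup>2 \<le> real (card L) * (\<Sum>l\<in>L. 1 + P l)"
      by (simp add: mult.commute)
  qed
  also have "\<dots> \<le> sqrt (real (card D) * (real d + real T))"
  proof (rule real_sqrt_le_mono, rule mult_mono)
    show "real (card L) \<le> real (card D)" using cardL by simp
    have "(\<Sum>l\<in>L. 1 + P l) \<le> (\<Sum>l=1..m. 1 + P l)"
      using Pnn LsubM by (intro sum_mono2) auto
    also have "\<dots> = real m + real T" using sumP by (simp add: sum.distrib)
    also have "\<dots> \<le> real d + real T"
    proof -
      have "m \<le> d" using dqm qpos by simp
      then show ?thesis by simp
    qed
    finally show "(\<Sum>l\<in>L. 1 + P l) \<le> real d + real T" .
    show "0 \<le> real (card D)" by simp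
    show "0 \<le> (\<Sum>l\<in>L. 1 + P l)" using Pnn LsubM by (intro sum_nonneg) (smt (verit) subsetD)
  qed
  also have "\<dots> = sqrt (real (card D)) * sqrt (real d + real T)" by (rule real_sqrt_mult)
  finally have "(\<Sum>l=1..m. c l * sqrt (1 + P l)) \<le> sqrt (real (card D)) * sqrt (real d + real T)" .
  then show ?thesis unfolding c_def P_def D_def d_def m_def by simp
qed

end
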